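(* Let $F$ be a graph with $\gamma(F)=1$ and $k = |E(F)| \geq 3$. Let $G$ be either a pure $(m,F)$-special graph or a copy of $F+e$ for some $e \in E(\overline{F})$. Then: (a) for every $x \in V(G)$, $G$ has a minimum $F$-isolating set $D$ with $x \in D$; (b) if $G$ is a pure $(m,F)$-special graph and $x \in V(G)$ is such that $x$ is not a vertex of the quotient graph in any representation of $G$ as a pure $(m,F)$-special graph, then $\iota(G-x,F) = \iota(G,F) - 1$.
   Context: All graphs are finite and simple. For $D \subseteq V(G)$, $N_G[D]$ is the closed neighbourhood of $D$; $G-x$ is $G$ with vertex $x$ deleted. A set $D \subseteq V(G)$ is an $F$-isolating set of $G$ if $G - N_G[D]$ contains no subgraph isomorphic to $F$; $\iota(G,F)$ is the minimum size of such a set, and a minimum $F$-isolating set is one of this size. $\gamma(F)=1$ means $F$ has a vertex adjacent to all other vertices of $F$. $\overline{F}$ is the complement of $F$ and $F+e = (V(F),E(F)\cup\{e\})$. A pure $(m,F)$-special graph is a graph obtained as follows: $m+1 = q(k+2)$ for an integer $q\ge 1$; take a tree $T$ with $q$ vertices $v_1,\dots,v_q$, pairwise disjoint copies $F_1,\dots,F_q$ of $F$ disjoint from $V(T)$, and vertices $w_i\in V(F_i)$; the graph has vertex set $V(T)\cup\bigcup_i V(F_i)$ and edge set $E(T)\cup\bigcup_i (E(F_i)\cup\{v_iw_i\})$. A choice of such $T, F_i, w_i$ is a representation of the graph; $T$ is its quotient graph, the subgraph $G_i$ with vertex set $\{v_i\}\cup V(F_i)$ and edge set $E(F_i)\cup\{v_iw_i\}$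 is an $F$-constituent, and $v_i$ is its $F$-connection. (For such a graph, $\iota(G,F) = q$.) *)

theory Defs
  imports Main
begin

type_synonym 'a graph = "'a set \<times> 'a set set"

definition verts :: "'a graph \<Rightarrow> 'a set" where "verts G = fst G"
definition edges :: "'a graph \<Rightarrow> 'a set set" where "edges G = snd G"

definition wf_graph :: "'a graph \<Rightarrow> bool" where
  "wf_graph G \<longleftrightarrow> finite (verts G) \<and>
     (\<forall>e\<in>edges G. \<exists>u v. e = {u, v} \<and> u \<noteq> v \<and> u \<in> verts G \<and> v \<in> verts G)"

definition graph_iso :: "'b graph \<Rightarrow> 'a graph \<Rightarrow> ('b \<Rightarrow> 'a) \<Rightarrow> bool" where
  "graph_iso A B f \<longleftrightarrow> bij_betw f (verts A) (verts B) \<and>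
     edges B = (\<lambda>e. f ` e) ` edges A"

definition isomorphic :: "'b graph \<Rightarrow> 'a graph \<Rightarrow> bool" where
  "isomorphic A B \<longleftrightarrow> (\<exists>f. graph_iso A B f)"

definition contains_copy :: "'a graph \<Rightarrow> 'b graph \<Rightarrow> bool" where
  "contains_copy H F \<longleftrightarrow> (\<exists>f. inj_on f (verts F) \<and> f ` verts F \<subseteq> verts H \<and>
     (\<forall>e\<in>edges F. f ` e \<in> edges H))"

definition induced :: "'a graph \<Rightarrow> 'a set \<Rightarrow> 'a graph" where
  "induced G S = (S, {e \<in> edges G. e \<subseteq> S})"

definition closed_nbhd :: "'a graph \<Rightarrow> 'a set \<Rightarrow> 'a set" where
  "closed_nbhd G D = D \<union> {v \<in> verts G. \<exists>u\<in>D. {u, v} \<in> edges G}"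

definition delete_vertex :: "'a graph \<Rightarrow> 'a \<Rightarrow> 'a graph" where
  "delete_vertex G x = induced G (verts G - {x})"

definition isolating :: "'a graph \<Rightarrow> 'b graph \<Rightarrow> 'a set \<Rightarrow> bool" where
  "isolating G F D \<longleftrightarrow> D \<subseteq> verts G \<and>
     \<not> contains_copy (induced G (verts G - closed_nbhd G D)) F"

definition iota :: "'a graph \<Rightarrow> 'b graph \<Rightarrow> nat" where
  "iota G F = (LEAST n. \<exists>D. isolating G F D \<and> card D = n)"

definition min_isolating :: "'a graph \<Rightarrow> 'b graph \<Rightarrow> 'a set \<Rightarrow> bool" where
  "min_isolating G F D \<longleftrightarrow> isolating G F D \<and> card D = iota G F"

text \<open>gamma(F) = 1: some vertex adjacent to all other vertices.\<close>
definition dominating_vertex_exists :: "'b graph \<Rightarrow> bool" where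
  "dominating_vertex_exists F \<longleftrightarrow>
     (\<exists>c\<in>verts F. \<forall>v\<in>verts F. v \<noteq> c \<longrightarrow> {c, v} \<in> edges F)"

definition connected_graph :: "'a graph \<Rightarrow> bool" where
  "connected_graph T \<longleftrightarrow> verts T \<noteq> {} \<and>
     (\<forall>u\<in>verts T. \<forall>v\<in>verts T. (u, v) \<in> {(a, b). {a, b} \<in> edges T}\<^sup>*)"

definition has_cycle :: "'a graph \<Rightarrow> bool" where
  "has_cycle T \<longleftrightarrow> (\<exists>cs. distinct cs \<and> length cs \<ge> 3 \<and> set cs \<subseteq> verts T \<and>
     (\<forall>i < length cs. {cs ! i, cs ! ((i + 1) mod length cs)} \<in> edges T))"

definition is_tree :: "'a graph \<Rightarrow> bool" where
  "is_tree T \<longleftrightarrow> wf_graph T \<and> connected_graph T \<and> \<not> has_cycle T"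

text \<open>A representation of G as a pure (m,F)-special graph: quotient tree T with
  vertices v 0, ..., v (q-1), copies Fc i of F, attachment vertices w i.\<close>
definition special_rep ::
  "nat \<Rightarrow> 'b graph \<Rightarrow> 'a graph \<Rightarrow> nat \<Rightarrow> 'a graph \<Rightarrow> (nat \<Rightarrow> 'a) \<Rightarrow> (nat \<Rightarrow> 'a graph)
     \<Rightarrow> (nat \<Rightarrow> 'a) \<Rightarrow> bool" where
  "special_rep m F G q T v Fc w \<longleftrightarrow>
     q \<ge> 1 \<and> m + 1 = q * (card (edges F) + 2) \<and>
     is_tree T \<and> verts T = v ` {..<q} \<and> inj_on v {..<q} \<and>
     (\<forall>i<q. isomorphic F (Fc i)) \<and>
     (\<forall>i<q. \<forall>j<q. i \<noteq> j \<longrightarrow> verts (Fc i) \<inter> verts (Fc j) = {}) \<and>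
     (\<forall>i<q. verts (Fc i) \<inter> verts T = {}) \<and>
     (\<forall>i<q. w i \<in> verts (Fc i)) \<and>
     G = (verts T \<union> (\<Union>i<q. verts (Fc i)),
          edges T \<union> (\<Union>i<q. edges (Fc i) \<union> {{v i, w i}}))"

definition pure_special :: "nat \<Rightarrow> 'b graph \<Rightarrow> 'a graph \<Rightarrow> bool" where
  "pure_special m F G \<longleftrightarrow> (\<exists>q T v Fc w. special_rep m F G q T v Fc w)"

definition add_edge :: "'b graph \<Rightarrow> 'b set \<Rightarrow> 'b graph" where
  "add_edge F e = (verts F, insert e (edges F))"

definition complement_edge :: "'b graph \<Rightarrow> 'b set \<Rightarrow> bool" where
  "complement_edge F e \<longleftrightarrow> (\<exists>u v. e = {u, v} \<and> u \<noteq> v \<and> u \<in> verts F \<and> v \<in> verts F \<and>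
     e \<notin> edges F)"

end

theory Submission
  imports Defs
begin

lemma wf_edge: "wf_graph F \<Longrightarrow> e \<in> edges F \<Longrightarrow> \<exists>a b. e = {a,b} \<and> a \<noteq> b \<and> a \<in> verts F \<and> b \<in> verts F"
  unfolding wf_graph_def by blast

lemma wf_edge_sub: "wf_graph F \<Longrightarrow> e \<in> edges F \<Longrightarrow> e \<subseteq> verts F"
  using wf_edge by fastforce

lemma wf_fin_edges: "wf_graph F \<Longrightarrow> finite (edges F)"
proof -
  assume w: "wf_graph F"
  have "edges F \<subseteq> Pow (verts F)" using wf_edge_sub[OF w] by blast
  moreover have "finite (Pow (verts F))" using w unfolding wf_graph_def by simp
  ultimately show ?thesis using finite_subset by blast
qed

lemma three_verts:
  assumes w: "wf_graph F" and d: "dominating_vertex_exists F" and k: "card (edges F) \<ge> 3"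
  shows "\<exists>c a b. c \<in> verts F \<and> a \<in> verts F \<and> b \<in> verts F \<and> a \<noteq> b \<and> a \<noteq> c \<and> b \<noteq> c \<and>
     (\<forall>u\<in>verts F. u \<noteq> c \<longrightarrow> {c, u} \<in> edges F)"
proof -
  obtain c where c: "c \<in> verts F" "\<forall>u\<in>verts F. u \<noteq> c \<longrightarrow> {c, u} \<in> edges F"
    using d unfolding dominating_vertex_exists_def by blast
  have "edges F \<noteq> {}" using k by auto
  then obtain e where e: "e \<in> edges F" by blast
  then obtain x y where xy: "e = {x,y}" "x \<noteq> y" "x \<in> verts F" "y \<in> verts F" using wf_edge[OF w] by blast
  then obtain a where a: "a \<in> verts F" "a \<noteq> c" by blast
  show ?thesis
  proof (cases "\<exists>b\<in>verts F. b \<noteq> a \<and> b \<noteq> c")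
    case True
    then show ?thesis using a c by blast
  next
    case False
    have "edges F \<subseteq> {{c,a}}"
    proof
      fix e' assume "e' \<in> edges F"
      then obtain p r where "e' = {p,r}" "p \<noteq> r" "p \<in> verts F" "r \<in> verts F" using wf_edge[OF w] by blast
      then show "e' \<in> {{c,a}}" using False by auto
    qed
    then have "card (edges F) \<le> 1" using card_mono[of "{{c,a}}" "edges F"] by simp
    then show ?thesis using k by simp
  qed
qed

definition goodF :: "'b graph \<Rightarrow> 'a graph \<Rightarrow> bool" where
  "goodF F H \<longleftrightarrow> finite (edges H) \<and> card (edges H) = card (edges F) \<and> finite (verts H) \<and>
     (\<forall>e\<in>edges H. \<exists>a b. e = {a,b} \<and> a \<noteq> b \<and> a \<in> verts H \<and> b \<in> verts H) \<and>
     (\<exists>c a b. c \<in> verts H \<and> a \<in> verts H \<and> b \<in> verts H \<and> a \<noteq> b \<and> a \<noteq> c \<and> b \<noteq> c \<and>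
     (\<forall>u\<in>verts H. u \<noteq> c \<longrightarrow> {c, u} \<in> edges H)) \<and>
     (\<forall>R::'a graph. verts H \<subseteq> verts R \<longrightarrow> edges H \<subseteq> edges R \<longrightarrow> contains_copy R F)"

lemma iso_good:
  fixes F :: "'b graph" and H :: "'a graph"
  assumes w: "wf_graph F" and d: "dominating_vertex_exists F" and k: "card (edges F) \<ge> 3"
    and iso: "graph_iso F H f"
  shows "goodF F H"
proof -
  have bij: "bij_betw f (verts F) (verts H)" and EH: "edges H = image f ` edges F"
    using iso unfolding graph_iso_def by blast+
  have inj: "inj_on f (verts F)" using bij bij_betw_imp_inj_on by blast
  have VH: "verts H = f ` verts F" using bij bij_betw_imp_surj_on by metis
  have sub: "edges F \<subseteq> Pow (verts F)" using wf_edge_sub[OF w] by blast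
  have injP: "inj_on (image f) (edges F)" using inj_on_image_Pow[OF inj] sub inj_on_subset by blast
  have finV: "finite (verts F)" using w unfolding wf_graph_def by simp
  have fE: "finite (edges F)" using wf_fin_edges[OF w] .
  have 1: "finite (edges H)" using EH fE by simp
  have 2: "card (edges H) = card (edges F)" using EH card_image[OF injP] by simp
  have 3: "finite (verts H)" using VH finV by simp
  have 4: "\<forall>e\<in>edges H. \<exists>a b. e = {a,b} \<and> a \<noteq> b \<and> a \<in> verts H \<and> b \<in> verts H"
  proof
    fix e assume "e \<in> edges H"
    then obtain e0 where e0: "e0 \<in> edges F" "e = f ` e0" using EH by blast
    then obtain a b where ab: "e0 = {a,b}" "a \<noteq> b" "a \<in> verts F" "b \<in> verts F" using wf_edge[OF w] by blast
    have "f a \<noteq> f b" using ab inj inj_on_contraD by metis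
    moreover have "e = {f a, f b}" using e0 ab by simp
    ultimately show "\<exists>a b. e = {a,b} \<and> a \<noteq> b \<and> a \<in> verts H \<and> b \<in> verts H"
      using VH ab by blast
  qed
  obtain c a b where cab: "c \<in> verts F" "a \<in> verts F" "b \<in> verts F" "a \<noteq> b" "a \<noteq> c" "b \<noteq> c"
     "\<forall>u\<in>verts F. u \<noteq> c \<longrightarrow> {c, u} \<in> edges F" using three_verts[OF w d k] by blast
  have 5: "\<forall>u\<in>verts H. u \<noteq> f c \<longrightarrow> {f c, u} \<in> edges H"
  proof (intro ballI impI)
    fix u assume "u \<in> verts H" "u \<noteq> f c"
    then obtain u0 where u0: "u0 \<in> verts F" "u = f u0" "u0 \<noteq> c" using VH by blast
    then have "{c,u0} \<in> edges F" using cab by blast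
    then have "f ` {c,u0} \<in> edges H" unfolding EH by (rule imageI)
    then show "{f c, u} \<in> edges H" using u0 by simp
  qed
  have 6: "f c \<in> verts H" "f a \<in> verts H" "f b \<in> verts H" "f a \<noteq> f b" "f a \<noteq> f c" "f b \<noteq> f c"
    using cab VH inj inj_on_contraD by (blast, blast, blast, metis, metis, metis)
  have 7: "\<forall>R::'a graph. verts H \<subseteq> verts R \<longrightarrow> edges H \<subseteq> edges R \<longrightarrow> contains_copy R F"
  proof (intro allI impI)
    fix R :: "'a graph" assume R: "verts H \<subseteq> verts R" "edges H \<subseteq> edges R"
    have "f ` verts F \<subseteq> verts R" using R VH by simp
    moreover have "\<forall>e\<in>edges F. f ` e \<in> edges R" using R EH by blast
    ultimately show "contains_copy R F" unfolding contains_copy_def using inj by blast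
  qed
  have 8: "\<exists>c a b. c \<in> verts H \<and> a \<in> verts H \<and> b \<in> verts H \<and> a \<noteq> b \<and> a \<noteq> c \<and> b \<noteq> c \<and>
     (\<forall>u\<in>verts H. u \<noteq> c \<longrightarrow> {c, u} \<in> edges H)"
    apply (rule exI[of _ "f c"], rule exI[of _ "f a"], rule exI[of _ "f b"])
    using 5 6 by simp
  show ?thesis unfolding goodF_def using 1 2 3 4 7 8 by simp
qed

lemma no_copy_region:
  assumes w: "wf_graph F" and d: "dominating_vertex_exists F"
    and reg: "\<forall>y\<in>verts R. \<exists>P B. y \<in> P \<and> (\<forall>u. {y,u} \<in> edges R \<longrightarrow> u \<in> P) \<and>
        {e\<in>edges R. e \<subseteq> P} \<subseteq> B \<and> finite B \<and> card B < card (edges F)"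
  shows "\<not> contains_copy R F"
proof
  assume "contains_copy R F"
  then obtain f where f: "inj_on f (verts F)" "f ` verts F \<subseteq> verts R" "\<forall>e\<in>edges F. f ` e \<in> edges R"
    unfolding contains_copy_def by blast
  obtain c where c: "c \<in> verts F" "\<forall>u\<in>verts F. u \<noteq> c \<longrightarrow> {c, u} \<in> edges F"
    using d unfolding dominating_vertex_exists_def by blast
  have "f c \<in> verts R" using f(2) c(1) by blast
  then obtain P B where PB: "f c \<in> P" "\<forall>u. {f c,u} \<in> edges R \<longrightarrow> u \<in> P"
     "{e\<in>edges R. e \<subseteq> P} \<subseteq> B" "finite B" "card B < card (edges F)"
     using bspec[OF reg \<open>f c \<in> verts R\<close>] by blast
  have fP: "f u \<in> P" if "u \<in> verts F" for u
  proof (cases "u = c")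
    case True then show ?thesis using PB(1) by simp
  next
    case False
    then have "{c,u} \<in> edges F" using c(2) that by blast
    then have "f ` {c,u} \<in> edges R" using f(3) by blast
    then have "{f c, f u} \<in> edges R" by simp
    then show ?thesis using PB(2) by blast
  qed
  have sub: "edges F \<subseteq> Pow (verts F)" using wf_edge_sub[OF w] by blast
  have injP: "inj_on (image f) (edges F)" using inj_on_image_Pow[OF f(1)] sub inj_on_subset by blast
  have "image f ` edges F \<subseteq> B"
  proof
    fix e' assume "e' \<in> image f ` edges F"
    then obtain e where e: "e \<in> edges F" "e' = f ` e" by blast
    have "e \<subseteq> verts F" using sub e by blast
    then have "e' \<subseteq> P" using e fP by blast
    moreover have "e' \<in> edges R" using e f(3) by blast
    ultimately show "e' \<in> B" using PB(3) by blast
  qed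
  then have "card (image f ` edges F) \<le> card B" using PB(4) card_mono by blast
  then have "card (edges F) \<le> card B" using card_image[OF injP] by simp
  then show False using PB(5) by simp
qed

lemma iota_eq:
  assumes "isolating H F D0" "card D0 = n" "\<And>D. isolating H F D \<Longrightarrow> n \<le> card D"
  shows "iota H F = n"
  unfolding iota_def
  by (rule Least_equality) (use assms in auto)


lemma verts_pair[simp]: "verts (a, b) = a" by (simp add: verts_def)
lemma edges_pair[simp]: "edges (a, b) = b" by (simp add: edges_def)

lemma induced_simps[simp]: "verts (induced G S) = S" "edges (induced G S) = {e\<in>edges G. e \<subseteq> S}"
  by (simp_all add: induced_def verts_def edges_def)

lemma no_copy_induced:
  assumes w: "wf_graph F" and d: "dominating_vertex_exists F"
    and reg: "\<And>y. y \<in> S \<Longrightarrow> \<exists>P B. y \<in> P \<and> (\<forall>u. {y,u} \<in> edges G \<and> {y,u} \<subseteq> S \<longrightarrow> u \<in> P) \<and>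
        {e\<in>edges G. e \<subseteq> S \<and> e \<subseteq> P} \<subseteq> B \<and> finite B \<and> card B < card (edges F)"
  shows "\<not> contains_copy (induced G S) F"
proof (rule no_copy_region[OF w d])
  show "\<forall>y\<in>verts (induced G S). \<exists>P B. y \<in> P \<and> (\<forall>u. {y,u} \<in> edges (induced G S) \<longrightarrow> u \<in> P) \<and>
        {e\<in>edges (induced G S). e \<subseteq> P} \<subseteq> B \<and> finite B \<and> card B < card (edges F)"
  proof
    fix y assume "y \<in> verts (induced G S)"
    then have "y \<in> S" by simp
    from reg[OF this] obtain P B where PB: "y \<in> P" "\<forall>u. {y,u} \<in> edges G \<and> {y,u} \<subseteq> S \<longrightarrow> u \<in> P"
        "{e\<in>edges G. e \<subseteq> S \<and> e \<subseteq> P} \<subseteq> B" "finite B" "card B < card (edges F)" by blast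
    have "\<forall>u. {y,u} \<in> edges (induced G S) \<longrightarrow> u \<in> P" using PB(2) by simp
    moreover have "{e\<in>edges (induced G S). e \<subseteq> P} \<subseteq> B" using PB(3) by auto
    ultimately show "\<exists>P B. y \<in> P \<and> (\<forall>u. {y,u} \<in> edges (induced G S) \<longrightarrow> u \<in> P) \<and>
        {e\<in>edges (induced G S). e \<subseteq> P} \<subseteq> B \<and> finite B \<and> card B < card (edges F)"
      using PB(1,4,5) by blast
  qed
qed

lemma nbhd_sub: "D \<subseteq> closed_nbhd G D"
  by (auto simp: closed_nbhd_def)

lemma nbhd_in: "y \<in> verts G \<Longrightarrow> d \<in> D \<Longrightarrow> {d,y} \<in> edges G \<Longrightarrow> y \<in> closed_nbhd G D"
  by (auto simp: closed_nbhd_def)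

lemma nbhd_cases: "y \<in> closed_nbhd G D \<Longrightarrow> y \<in> D \<or> (\<exists>d\<in>D. {d,y} \<in> edges G)"
  by (auto simp: closed_nbhd_def)

lemma nbhd_empty[simp]: "closed_nbhd G {} = {}"
  by (auto simp: closed_nbhd_def)

locale SP =
  fixes F :: "'b graph" and G :: "'a graph" and m :: nat and q :: nat and T :: "'a graph"
    and v :: "nat \<Rightarrow> 'a" and Fc :: "nat \<Rightarrow> 'a graph" and w :: "nat \<Rightarrow> 'a"
  assumes wfF: "wf_graph F" and domF: "dominating_vertex_exists F" and k3: "card (edges F) \<ge> 3"
    and rep: "special_rep m F G q T v Fc w"
begin

lemma q1: "q \<ge> 1" and mq: "m + 1 = q * (card (edges F) + 2)" and tree: "is_tree T"
  and VT: "verts T = v ` {..<q}" and injv: "inj_on v {..<q}"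
  and isoF: "\<And>i. i < q \<Longrightarrow> isomorphic F (Fc i)"
  and disjF: "\<And>i j. i < q \<Longrightarrow> j < q \<Longrightarrow> i \<noteq> j \<Longrightarrow> verts (Fc i) \<inter> verts (Fc j) = {}"
  and disjT: "\<And>i. i < q \<Longrightarrow> verts (Fc i) \<inter> verts T = {}"
  and wI: "\<And>i. i < q \<Longrightarrow> w i \<in> verts (Fc i)"
  and Gd: "G = (verts T \<union> (\<Union>i<q. verts (Fc i)), edges T \<union> (\<Union>i<q. edges (Fc i) \<union> {{v i, w i}}))"
  using rep unfolding special_rep_def by blast+

lemma VG: "verts G = verts T \<union> (\<Union>i<q. verts (Fc i))"
  by (subst Gd) (simp add: verts_def)

lemma EG: "edges G = edges T \<union> (\<Union>i<q. edges (Fc i) \<union> {{v i, w i}})"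
  by (subst Gd) (simp add: edges_def)

lemma good: "i < q \<Longrightarrow> goodF F (Fc i)"
  using isoF iso_good[OF wfF domF k3] unfolding isomorphic_def by blast

lemma wfT: "wf_graph T" using tree unfolding is_tree_def by blast

lemma ET: "e \<in> edges T \<Longrightarrow> \<exists>a b. e = {a,b} \<and> a \<noteq> b \<and> a \<in> verts T \<and> b \<in> verts T"
  using wf_edge[OF wfT] by blast

lemma EF: "i < q \<Longrightarrow> e \<in> edges (Fc i) \<Longrightarrow> \<exists>a b. e = {a,b} \<and> a \<noteq> b \<and> a \<in> verts (Fc i) \<and> b \<in> verts (Fc i)"
  using good unfolding goodF_def by blast

lemma EFsub: "i < q \<Longrightarrow> e \<in> edges (Fc i) \<Longrightarrow> e \<subseteq> verts (Fc i)"
  using EF by blast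

lemma cardEF: "i < q \<Longrightarrow> card (edges (Fc i)) = card (edges F)"
  using good unfolding goodF_def by blast

lemma finEF: "i < q \<Longrightarrow> finite (edges (Fc i))"
  using good unfolding goodF_def by blast

lemma finVF: "i < q \<Longrightarrow> finite (verts (Fc i))"
  using good unfolding goodF_def by blast

lemma domFc: "i < q \<Longrightarrow> \<exists>c a b. c \<in> verts (Fc i) \<and> a \<in> verts (Fc i) \<and> b \<in> verts (Fc i) \<and> a \<noteq> b \<and> a \<noteq> c \<and> b \<noteq> c \<and>
     (\<forall>u\<in>verts (Fc i). u \<noteq> c \<longrightarrow> {c, u} \<in> edges (Fc i))"
  using good unfolding goodF_def by blast

lemma copyFc: "i < q \<Longrightarrow> verts (Fc i) \<subseteq> verts R \<Longrightarrow> edges (Fc i) \<subseteq> edges R \<Longrightarrow> contains_copy R F"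
  using good unfolding goodF_def by blast

lemma vT: "i < q \<Longrightarrow> v i \<in> verts T" using VT by blast

lemma FT: "i < q \<Longrightarrow> y \<in> verts (Fc i) \<Longrightarrow> y \<notin> verts T"
  using disjT by blast

lemma FF: "i < q \<Longrightarrow> j < q \<Longrightarrow> y \<in> verts (Fc i) \<Longrightarrow> y \<in> verts (Fc j) \<Longrightarrow> i = j"
  using disjF by blast

lemma vinj: "i < q \<Longrightarrow> j < q \<Longrightarrow> v i = v j \<Longrightarrow> i = j"
  using injv unfolding inj_on_def by blast

lemma edge_G: "e \<in> edges G \<longleftrightarrow> e \<in> edges T \<or> (\<exists>i<q. e \<in> edges (Fc i)) \<or> (\<exists>i<q. e = {v i, w i})"
  unfolding EG by blast

lemma vert_G: "y \<in> verts G \<longleftrightarrow> y \<in> verts T \<or> (\<exists>i<q. y \<in> verts (Fc i))"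
  unfolding VG by blast

lemma edge_shape: "e \<in> edges G \<Longrightarrow> \<exists>a b. e = {a,b} \<and> a \<noteq> b \<and> a \<in> verts G \<and> b \<in> verts G"
proof -
  assume "e \<in> edges G"
  then consider "e \<in> edges T" | i where "i<q" "e \<in> edges (Fc i)" | i where "i<q" "e = {v i, w i}"
    unfolding edge_G by blast
  then show ?thesis
  proof cases
    case 1 then show ?thesis using ET vert_G by metis
  next
    case 2 then show ?thesis using EF vert_G by metis
  next
    case 3
    have "v i \<noteq> w i" using FT[OF 3(1) wI[OF 3(1)]] vT[OF 3(1)] by auto
    then show ?thesis using 3 vT wI vert_G by metis
  qed
qed

lemma finVG: "finite (verts G)"
  unfolding VG using finVF wfT unfolding wf_graph_def by blast

lemma finEG: "finite (edges G)"
proof -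
  have "edges G \<subseteq> Pow (verts G)" using edge_shape by blast
  then show ?thesis using finVG finite_subset by blast
qed

lemma nbF: "j < q \<Longrightarrow> u \<in> verts (Fc j) \<Longrightarrow> {d,u} \<in> edges G \<Longrightarrow> d \<in> verts (Fc j) \<or> d = v j"
proof -
  assume j: "j < q" and u: "u \<in> verts (Fc j)" and e: "{d,u} \<in> edges G"
  from e consider "{d,u} \<in> edges T" | i where "i<q" "{d,u} \<in> edges (Fc i)" | i where "i<q" "{d,u} = {v i, w i}"
    unfolding edge_G by blast
  then show ?thesis
  proof cases
    case 1
    then have "{d,u} \<subseteq> verts T" by (rule wf_edge_sub[OF wfT])
    then have "u \<in> verts T" by simp
    then show ?thesis using FT[OF j u] by blast
  next
    case 2
    then have "{d,u} \<subseteq> verts (Fc i)" using EFsub by blast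
    then have "d \<in> verts (Fc i)" "u \<in> verts (Fc i)" by auto
    then show ?thesis using FF[OF j 2(1) u] by blast
  next
    case 3
    have "u \<noteq> v i" using FT[OF j u] vT[OF 3(1)] by blast
    then have "u = w i" using 3(2) by (auto simp: doubleton_eq_iff)
    then have "i = j" using FF[OF j 3(1) u] wI[OF 3(1)] by simp
    then show ?thesis using 3(2) u \<open>u = w i\<close> by (auto simp: doubleton_eq_iff)
  qed
qed

lemma nbT: "j < q \<Longrightarrow> {d, v j} \<in> edges G \<Longrightarrow> (d \<in> verts T \<and> d \<noteq> v j) \<or> d = w j"
proof -
  assume j: "j < q" and e: "{d,v j} \<in> edges G"
  from e consider "{d,v j} \<in> edges T" | i where "i<q" "{d,v j} \<in> edges (Fc i)" | i where "i<q" "{d,v j} = {v i, w i}"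
    unfolding edge_G by blast
  then show ?thesis
  proof cases
    case 1
    then obtain a b where "{d, v j} = {a,b}" "a \<noteq> b" "a \<in> verts T" "b \<in> verts T" using ET by blast
    then show ?thesis by (auto simp: doubleton_eq_iff)
  next
    case 2
    then have "{d, v j} \<subseteq> verts (Fc i)" using EFsub by blast
    then have "v j \<in> verts (Fc i)" by simp
    then show ?thesis using FT[OF 2(1)] vT[OF j] by blast
  next
    case 3
    have "v j \<noteq> w i" using FT[OF 3(1) wI[OF 3(1)]] vT[OF j] by auto
    then have "v j = v i" using 3(2) by (auto simp: doubleton_eq_iff)
    then have "i = j" using vinj[OF 3(1) j] by simp
    moreover have "v i \<noteq> w i" using FT[OF 3(1) wI[OF 3(1)]] vT[OF 3(1)] by auto
    ultimately show ?thesis using 3(2) by (auto simp: doubleton_eq_iff)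
  qed
qed

lemma EF_G: "i < q \<Longrightarrow> edges (Fc i) \<subseteq> edges G" unfolding EG by blast
lemma vw_G: "i < q \<Longrightarrow> {v i, w i} \<in> edges G" unfolding EG by blast
lemma VF_G: "i < q \<Longrightarrow> verts (Fc i) \<subseteq> verts G" unfolding VG by blast
lemma VT_G: "verts T \<subseteq> verts G" unfolding VG by blast

end


context SP begin

lemma RA:
  assumes j: "j < q" and z: "z \<in> verts (Fc j)" and zS: "z \<notin> S" and vS: "v j \<notin> S"
    and y: "y \<in> verts (Fc j)"
  shows "\<exists>P B. y \<in> P \<and> (\<forall>u. {y,u} \<in> edges G \<and> {y,u} \<subseteq> S \<longrightarrow> u \<in> P) \<and>
        {e\<in>edges G. e \<subseteq> S \<and> e \<subseteq> P} \<subseteq> B \<and> finite B \<and> card B < card (edges F)"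
proof -
  define P where "P = verts (Fc j)"
  define B where "B = edges (Fc j) - {e. z \<in> e}"
  have 1: "\<forall>u. {y,u} \<in> edges G \<and> {y,u} \<subseteq> S \<longrightarrow> u \<in> P"
  proof (intro allI impI)
    fix u assume u: "{y,u} \<in> edges G \<and> {y,u} \<subseteq> S"
    then have "{u,y} \<in> edges G" by (simp add: insert_commute)
    then have "u \<in> verts (Fc j) \<or> u = v j" using nbF[OF j y] by blast
    then show "u \<in> P" using u vS P_def by auto
  qed
  have 2: "{e\<in>edges G. e \<subseteq> S \<and> e \<subseteq> P} \<subseteq> B"
  proof
    fix e assume e: "e \<in> {e\<in>edges G. e \<subseteq> S \<and> e \<subseteq> P}"
    then have eG: "e \<in> edges G" and eS: "e \<subseteq> S" and eP: "e \<subseteq> verts (Fc j)" using P_def by auto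
    from eG consider "e \<in> edges T" | l where "l<q" "e \<in> edges (Fc l)" | l where "l<q" "e = {v l, w l}"
      unfolding edge_G by blast
    then show "e \<in> B"
    proof cases
      case 1
      then obtain a b where ab: "e = {a,b}" "a \<in> verts T" using ET by blast
      then show ?thesis using eP FT[OF j] by auto
    next
      case 2
      then obtain a b where ab: "e = {a,b}" "a \<in> verts (Fc l)" using EF by blast
      then have "l = j" using FF[OF 2(1) j] eP by auto
      then show ?thesis using 2 eS zS B_def by auto
    next
      case 3
      then show ?thesis using eP FT[OF j] vT[OF 3(1)] by auto
    qed
  qed
  obtain c a b where cab: "c \<in> verts (Fc j)" "a \<in> verts (Fc j)" "a \<noteq> c"
     "\<forall>u\<in>verts (Fc j). u \<noteq> c \<longrightarrow> {c, u} \<in> edges (Fc j)" using domFc[OF j] by blast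
  have "\<exists>ez. ez \<in> edges (Fc j) \<and> z \<in> ez"
  proof (cases "z = c")
    case True then show ?thesis using cab by blast
  next
    case False then show ?thesis using cab z by blast
  qed
  then have "B \<subset> edges (Fc j)" using B_def by blast
  then have 4: "card B < card (edges F)" using psubset_card_mono[OF finEF[OF j]] cardEF[OF j] by simp
  have 3: "finite B" using B_def finEF[OF j] by simp
  show ?thesis using 1 2 3 4 y P_def by blast
qed

lemma card_two_less:
  assumes "finite A" "x \<in> A" "y \<in> A" "x \<noteq> y"
  shows "card (insert p (A - {x,y})) < card A"
proof -
  have "card (A - {x,y}) = card A - 2" using assms by (simp add: card_Diff_subset)
  moreover have "card (insert p (A - {x,y})) \<le> Suc (card (A - {x,y}))"
    using assms by (simp add: card_insert_if)
  moreover have "card A \<ge> 2"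
  proof -
    have "{x,y} \<subseteq> A" using assms by simp
    then have "card {x,y} \<le> card A" using assms card_mono by blast
    then show ?thesis using assms by simp
  qed
  ultimately show ?thesis by linarith
qed

lemma RB:
  assumes i: "i < q" and c: "c \<in> verts (Fc i)" and ab: "a \<noteq> b" "a \<noteq> c" "b \<noteq> c"
    and ca: "{c,a} \<in> edges (Fc i)" and cb: "{c,b} \<in> edges (Fc i)"
    and cS: "c \<notin> S" and vS: "\<And>j. j < q \<Longrightarrow> j \<noteq> i \<Longrightarrow> v j \<notin> S"
    and y: "y \<in> verts (Fc i) \<or> y = v i"
  shows "\<exists>P B. y \<in> P \<and> (\<forall>u. {y,u} \<in> edges G \<and> {y,u} \<subseteq> S \<longrightarrow> u \<in> P) \<and>
        {e\<in>edges G. e \<subseteq> S \<and> e \<subseteq> P} \<subseteq> B \<and> finite B \<and> card B < card (edges F)"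
proof -
  define P where "P = insert (v i) (verts (Fc i))"
  define B where "B = insert {v i, w i} (edges (Fc i) - {{c,a},{c,b}})"
  have 1: "\<forall>u. {y,u} \<in> edges G \<and> {y,u} \<subseteq> S \<longrightarrow> u \<in> P"
  proof (intro allI impI)
    fix u assume u: "{y,u} \<in> edges G \<and> {y,u} \<subseteq> S"
    then have uy: "{u,y} \<in> edges G" by (simp add: insert_commute)
    show "u \<in> P" using y
    proof
      assume "y \<in> verts (Fc i)"
      then show "u \<in> P" using nbF[OF i _ uy] P_def by blast
    next
      assume yv: "y = v i"
      then have "(u \<in> verts T \<and> u \<noteq> v i) \<or> u = w i" using nbT[OF i] uy by blast
      then show "u \<in> P"
      proof
        assume "u \<in> verts T \<and> u \<noteq> v i"
        then obtain j where "j < q" "u = v j" "j \<noteq> i" using VT by blast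
        then show "u \<in> P" using vS u by auto
      next
        assume "u = w i" then show "u \<in> P" using wI[OF i] P_def by blast
      qed
    qed
  qed
  have 2: "{e\<in>edges G. e \<subseteq> S \<and> e \<subseteq> P} \<subseteq> B"
  proof
    fix e assume e: "e \<in> {e\<in>edges G. e \<subseteq> S \<and> e \<subseteq> P}"
    then have eG: "e \<in> edges G" and eS: "e \<subseteq> S" and eP: "e \<subseteq> insert (v i) (verts (Fc i))" using P_def by auto
    from eG consider "e \<in> edges T" | l where "l<q" "e \<in> edges (Fc l)" | l where "l<q" "e = {v l, w l}"
      unfolding edge_G by blast
    then show "e \<in> B"
    proof cases
      case 1
      then obtain a' b' where ab': "e = {a',b'}" "a' \<noteq> b'" "a' \<in> verts T" "b' \<in> verts T" using ET by blast
      then have "a' = v i" "b' = v i" using eP FT[OF i] by auto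
      then show ?thesis using ab' by simp
    next
      case 2
      then obtain a' b' where ab': "e = {a',b'}" "a' \<in> verts (Fc l)" using EF by blast
      have "a' \<noteq> v i" using FT[OF 2(1) ab'(2)] vT[OF i] by auto
      then have "a' \<in> verts (Fc i)" using eP ab' by auto
      then have "l = i" using FF[OF 2(1) i ab'(2)] by simp
      moreover have "c \<notin> e" using eS cS by auto
      ultimately show ?thesis using 2 B_def by auto
    next
      case 3
      have "w l \<noteq> v i" using FT[OF 3(1) wI[OF 3(1)]] vT[OF i] by auto
      then have "w l \<in> verts (Fc i)" using eP 3 by auto
      then have "l = i" using FF[OF 3(1) i wI[OF 3(1)]] by simp
      then show ?thesis using 3 B_def by auto
    qed
  qed
  have 3: "finite B" using B_def finEF[OF i] by simp
  have "{c,a} \<noteq> {c,b}" using ab by (auto simp: doubleton_eq_iff)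
  then have "card B < card (edges (Fc i))" unfolding B_def
    using card_two_less[OF finEF[OF i] ca cb] by blast
  then have 4: "card B < card (edges F)" using cardEF[OF i] by simp
  have "y \<in> P" using y P_def by blast
  then show ?thesis using 1 2 3 4 by blast
qed

lemma tree_nb:
  assumes q2: "q \<ge> 2" and i: "i < q"
  shows "\<exists>j<q. j \<noteq> i \<and> {v j, v i} \<in> edges G"
proof -
  define j0 where "j0 = (if i = 0 then 1 else 0::nat)"
  have j0: "j0 < q" "j0 \<noteq> i" using q2 i j0_def by auto
  have "(v i, v j0) \<in> {(a, b). {a, b} \<in> edges T}\<^sup>*"
    using tree vT[OF i] vT[OF j0(1)] unfolding is_tree_def connected_graph_def by blast
  moreover have "v i \<noteq> v j0" using vinj[OF i j0(1)] j0(2) by auto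
  ultimately obtain y where "(v i, y) \<in> {(a, b). {a, b} \<in> edges T}"
    by (blast elim: converse_rtranclE)
  then have yT: "{v i, y} \<in> edges T" by simp
  then obtain a b where "{v i, y} = {a,b}" "a \<noteq> b" "a \<in> verts T" "b \<in> verts T" using ET by blast
  then have "y \<in> verts T" "y \<noteq> v i" by (auto simp: doubleton_eq_iff)
  then obtain j where "j < q" "y = v j" "j \<noteq> i" using VT by blast
  moreover have "{v j, v i} \<in> edges G" using yT \<open>y = v j\<close> unfolding EG by (auto simp: insert_commute)
  ultimately show ?thesis by blast
qed

lemma LB:
  assumes D: "D \<subseteq> verts G" and j: "j < q" and X: "verts (Fc j) \<inter> X = {}"
    and nc: "\<not> contains_copy (induced G (verts G - closed_nbhd G D - X)) F"
  shows "D \<inter> insert (v j) (verts (Fc j)) \<noteq> {}"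
proof
  assume De: "D \<inter> insert (v j) (verts (Fc j)) = {}"
  have "verts (Fc j) \<inter> closed_nbhd G D = {}"
  proof (rule ccontr)
    assume "verts (Fc j) \<inter> closed_nbhd G D \<noteq> {}"
    then obtain u where u: "u \<in> verts (Fc j)" "u \<in> closed_nbhd G D" by blast
    from nbhd_cases[OF u(2)] show False
    proof
      assume "u \<in> D" then show False using De u(1) by blast
    next
      assume "\<exists>d\<in>D. {d,u} \<in> edges G"
      then obtain d where "d \<in> D" "{d,u} \<in> edges G" by blast
      then show False using nbF[OF j u(1)] De by blast
    qed
  qed
  then have "verts (Fc j) \<subseteq> verts G - closed_nbhd G D - X" using VF_G[OF j] X by blast
  moreover have "edges (Fc j) \<subseteq> {e\<in>edges G. e \<subseteq> verts G - closed_nbhd G D - X}"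
    using calculation EF_G[OF j] EFsub[OF j] by blast
  ultimately have "contains_copy (induced G (verts G - closed_nbhd G D - X)) F"
    using copyFc[OF j] by simp
  then show False using nc by blast
qed

lemma card_LB:
  assumes D: "finite D" and J: "J \<subseteq> {..<q}" and h: "\<And>j. j \<in> J \<Longrightarrow> D \<inter> insert (v j) (verts (Fc j)) \<noteq> {}"
  shows "card J \<le> card D"
proof -
  define g where "g j = (SOME d. d \<in> D \<inter> insert (v j) (verts (Fc j)))" for j
  have g: "g j \<in> D \<inter> insert (v j) (verts (Fc j))" if "j \<in> J" for j
    unfolding g_def using h[OF that] by (metis (no_types, lifting) all_not_in_conv someI_ex)
  have "inj_on g J"
  proof
    fix j l assume jl: "j \<in> J" "l \<in> J" "g j = g l"
    have jq: "j < q" and lq: "l < q" using jl J by auto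
    have a: "g j \<in> insert (v j) (verts (Fc j))" using g[OF jl(1)] by blast
    have b: "g j \<in> insert (v l) (verts (Fc l))" using g[OF jl(2)] jl(3) by simp
    show "j = l"
    proof (cases "g j = v j")
      case True
      then have "g j \<in> verts T" using vT[OF jq] by simp
      then have "g j = v l" using b FT[OF lq] by blast
      then show ?thesis using True vinj[OF jq lq] by simp
    next
      case False
      then have gj: "g j \<in> verts (Fc j)" using a by blast
      then have "g j \<noteq> v l" using FT[OF jq gj] vT[OF lq] by auto
      then have "g j \<in> verts (Fc l)" using b by blast
      then show ?thesis using FF[OF jq lq gj] by simp
    qed
  qed
  moreover have "g ` J \<subseteq> D" using g by blast
  ultimately show ?thesis using card_inj_on_le D by blast
qed

end


lemma tree_single: "is_tree ({x}, {})"
proof -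
  have nc: "\<not> (\<exists>cs. distinct cs \<and> length cs \<ge> 3 \<and> set cs \<subseteq> {x} \<and> P cs)" for P
  proof
    assume "\<exists>cs. distinct cs \<and> length cs \<ge> 3 \<and> set cs \<subseteq> {x} \<and> P cs"
    then obtain cs where cs: "distinct cs" "length cs \<ge> 3" "set cs \<subseteq> {x}" by blast
    have "card (set cs) \<le> card {x}" by (rule card_mono) (use cs(3) in auto)
    then have "length cs \<le> 1" using distinct_card[OF cs(1)] by simp
    then show False using cs(2) by simp
  qed
  have 1: "wf_graph ({x}, {})" unfolding wf_graph_def verts_def edges_def by simp
  have 2: "connected_graph ({x}, {})" unfolding connected_graph_def verts_def edges_def by simp
  have 3: "\<not> has_cycle ({x}, {})" unfolding has_cycle_def verts_def
    using nc[of "\<lambda>cs. \<forall>i < length cs. {cs ! i, cs ! ((i + 1) mod length cs)} \<in> edges ({x}, {})"] by simp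
  show ?thesis unfolding is_tree_def using 1 2 3 by blast
qed

context SP begin

lemma isoT: "isolating G F (verts T)"
  unfolding isolating_def
proof (intro conjI)
  show "verts T \<subseteq> verts G" using VT_G .
  let ?S = "verts G - closed_nbhd G (verts T)"
  show "\<not> contains_copy (induced G ?S) F"
  proof (rule no_copy_induced[OF wfF domF])
    fix y assume y: "y \<in> ?S"
    then have yG: "y \<in> verts G" by blast
    have "y \<notin> verts T" using y nbhd_sub[of "verts T" G] by blast
    then obtain j where j: "j < q" "y \<in> verts (Fc j)" using yG unfolding vert_G by blast
    have vj: "v j \<in> closed_nbhd G (verts T)" using nbhd_sub[of "verts T" G] vT[OF j(1)] by blast
    have "w j \<in> closed_nbhd G (verts T)"
      using nbhd_in[OF _ vT[OF j(1)] vw_G[OF j(1)]] VF_G[OF j(1)] wI[OF j(1)] by blast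
    then show "\<exists>P B. y \<in> P \<and> (\<forall>u. {y,u} \<in> edges G \<and> {y,u} \<subseteq> ?S \<longrightarrow> u \<in> P) \<and>
        {e\<in>edges G. e \<subseteq> ?S \<and> e \<subseteq> P} \<subseteq> B \<and> finite B \<and> card B < card (edges F)"
      using RA[OF j(1) wI[OF j(1)] _ _ j(2), of ?S] vj by blast
  qed
qed

lemma isoFi:
  assumes i: "i < q" and x: "x \<in> verts (Fc i)"
  shows "isolating G F (insert x (v ` ({..<q} - {i})))"
  unfolding isolating_def
proof (intro conjI)
  let ?D = "insert x (v ` ({..<q} - {i}))"
  show "?D \<subseteq> verts G" using VF_G[OF i] x vT VT_G by blast
  let ?S = "verts G - closed_nbhd G ?D"
  obtain c a b where cab: "c \<in> verts (Fc i)" "a \<in> verts (Fc i)" "b \<in> verts (Fc i)" "a \<noteq> b" "a \<noteq> c" "b \<noteq> c"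
     "\<forall>u\<in>verts (Fc i). u \<noteq> c \<longrightarrow> {c, u} \<in> edges (Fc i)" using domFc[OF i] by blast
  have ca: "{c,a} \<in> edges (Fc i)" and cb: "{c,b} \<in> edges (Fc i)" using cab by auto
  have cN: "c \<in> closed_nbhd G ?D"
  proof (cases "x = c")
    case True then show ?thesis using nbhd_sub[of ?D G] by blast
  next
    case False
    then have "{c,x} \<in> edges (Fc i)" using cab(7) x by blast
    then have "{x,c} \<in> edges G" using EF_G[OF i] by (auto simp: insert_commute)
    then show ?thesis using nbhd_in[of c G x ?D] VF_G[OF i] cab(1) by blast
  qed
  have vS: "v j \<notin> ?S" if "j < q" "j \<noteq> i" for j
    using nbhd_sub[of ?D G] that by blast
  show "\<not> contains_copy (induced G ?S) F"
  proof (rule no_copy_induced[OF wfF domF])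
    fix y assume y: "y \<in> ?S"
    then have yG: "y \<in> verts G" by blast
    have RBi: "\<exists>P B. y \<in> P \<and> (\<forall>u. {y,u} \<in> edges G \<and> {y,u} \<subseteq> ?S \<longrightarrow> u \<in> P) \<and>
        {e\<in>edges G. e \<subseteq> ?S \<and> e \<subseteq> P} \<subseteq> B \<and> finite B \<and> card B < card (edges F)"
      if "y \<in> verts (Fc i) \<or> y = v i"
      using RB[OF i cab(1) cab(4,5,6) ca cb _ _ that, of ?S] cN vS by blast
    from yG consider "y \<in> verts T" | j where "j < q" "y \<in> verts (Fc j)" unfolding vert_G by blast
    then show "\<exists>P B. y \<in> P \<and> (\<forall>u. {y,u} \<in> edges G \<and> {y,u} \<subseteq> ?S \<longrightarrow> u \<in> P) \<and>
        {e\<in>edges G. e \<subseteq> ?S \<and> e \<subseteq> P} \<subseteq> B \<and> finite B \<and> card B < card (edges F)"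
    proof cases
      case 1
      then obtain j where j: "j < q" "y = v j" using VT by blast
      show ?thesis
      proof (cases "j = i")
        case True then show ?thesis using RBi j by blast
      next
        case False then show ?thesis using vS[OF j(1) False] y j by blast
      qed
    next
      case 2
      show ?thesis
      proof (cases "j = i")
        case True then show ?thesis using RBi 2 by blast
      next
        case False
        have "w j \<in> closed_nbhd G ?D"
          using nbhd_in[of "w j" G "v j" ?D] vw_G[OF 2(1)] VF_G[OF 2(1)] wI[OF 2(1)] False 2(1) by blast
        then show ?thesis
          using RA[OF 2(1) wI[OF 2(1)] _ _ 2(2), of ?S] vS[OF 2(1) False] by blast
      qed
    qed
  qed
qed

lemma lowerG: "isolating G F D \<Longrightarrow> q \<le> card D"
proof -
  assume iso: "isolating G F D"
  then have D: "D \<subseteq> verts G" and nc: "\<not> contains_copy (induced G (verts G - closed_nbhd G D - {})) F"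
    unfolding isolating_def by auto
  have "card {..<q} \<le> card D"
    using card_LB[of D "{..<q}"] LB[OF D _ _ nc] finite_subset[OF D finVG] by blast
  then show ?thesis by simp
qed

lemma iotaG: "iota G F = q"
proof (rule iota_eq[OF isoT])
  show "card (verts T) = q" using VT card_image[OF injv] by simp
  show "\<And>D. isolating G F D \<Longrightarrow> q \<le> card D" using lowerG by blast
qed

lemma partA: "x \<in> verts G \<Longrightarrow> \<exists>D. min_isolating G F D \<and> x \<in> D"
proof -
  assume "x \<in> verts G"
  then consider "x \<in> verts T" | i where "i < q" "x \<in> verts (Fc i)" unfolding vert_G by blast
  then show ?thesis
  proof cases
    case 1
    have "card (verts T) = q" using VT card_image[OF injv] by simp
    then show ?thesis using isoT iotaG 1 unfolding min_isolating_def by auto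
  next
    case 2
    let ?D = "insert x (v ` ({..<q} - {i}))"
    have "x \<notin> v ` ({..<q} - {i})" using FT[OF 2] VT by blast
    moreover have "card (v ` ({..<q} - {i})) = q - 1"
      using card_image[OF inj_on_subset[OF injv, of "{..<q} - {i}"]] 2(1) by auto
    ultimately have "card ?D = q" using q1 by simp
    then show ?thesis using isoFi[OF 2] iotaG unfolding min_isolating_def by auto
  qed
qed

end


lemma del_verts[simp]: "verts (delete_vertex G x) = verts G - {x}"
  by (simp add: delete_vertex_def)

lemma del_edges[simp]: "edges (delete_vertex G x) = {e\<in>edges G. e \<subseteq> verts G - {x}}"
  by (simp add: delete_vertex_def)

lemma del_isolating:
  assumes D: "D \<subseteq> verts G - {x}"
  shows "isolating (delete_vertex G x) F D \<longleftrightarrow>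
     \<not> contains_copy (induced G (verts G - closed_nbhd G D - {x})) F"
proof -
  have N: "closed_nbhd (delete_vertex G x) D = closed_nbhd G D - {x}"
    using D by (auto simp: closed_nbhd_def)
  have S: "verts (delete_vertex G x) - closed_nbhd (delete_vertex G x) D = verts G - closed_nbhd G D - {x}"
    unfolding N by auto
  have I: "induced (delete_vertex G x) (verts G - closed_nbhd G D - {x}) = induced G (verts G - closed_nbhd G D - {x})"
    unfolding induced_def by auto
  show ?thesis unfolding isolating_def S I using D by simp
qed

context SP begin

lemma q1_swap:
  assumes q: "q = 1" and x: "x \<in> verts (Fc 0)" and cc: "contains_copy (induced G (verts G - {x})) F"
  shows "\<exists>T' v' Fc' w'. special_rep m F G 1 T' v' Fc' w' \<and> x \<in> verts T'"
proof -
  have q0: "0 < q" using q by simp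
  have Iq: "{..<q} = {0}" using q by auto
  have VT1: "verts T = {v 0}" using VT Iq by simp
  have ET1: "edges T = {}"
  proof (rule ccontr)
    assume "edges T \<noteq> {}"
    then obtain e where "e \<in> edges T" by blast
    then obtain a b where "a \<noteq> b" "a \<in> verts T" "b \<in> verts T" using ET by blast
    then show False using VT1 by simp
  qed
  have VG1: "verts G = insert (v 0) (verts (Fc 0))" using VG VT1 Iq by simp
  have EG1: "edges G = insert {v 0, w 0} (edges (Fc 0))" using EG ET1 Iq by auto
  have v0: "v 0 \<notin> verts (Fc 0)" using FT[OF q0] vT[OF q0] by auto
  have x_ne: "x \<noteq> v 0" using v0 x by auto
  obtain f where f: "inj_on f (verts F)" "f ` verts F \<subseteq> verts G - {x}"
      "\<forall>e\<in>edges F. f ` e \<in> {e\<in>edges G. e \<subseteq> verts G - {x}}"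
    using cc unfolding contains_copy_def induced_simps by blast
  have finV0: "finite (verts (Fc 0))" using finVF[OF q0] .
  obtain g where g: "graph_iso F (Fc 0) g" using isoF[OF q0] unfolding isomorphic_def by blast
  have cardV0: "card (verts (Fc 0)) = card (verts F)"
    using g bij_betw_same_card unfolding graph_iso_def by metis
  have finVF0: "finite (verts F)" using wfF unfolding wf_graph_def by simp
  have "verts G - {x} = insert (v 0) (verts (Fc 0) - {x})" using VG1 x_ne by auto
  moreover have "card (verts (Fc 0) - {x}) = card (verts (Fc 0)) - 1" using x finV0 by simp
  moreover have "card (verts (Fc 0)) \<ge> 1" using x finV0 card_0_eq[OF finV0] by fastforce
  ultimately have cardVx: "card (verts G - {x}) = card (verts F)" using v0 finV0 cardV0 by simp
  have finVx: "finite (verts G - {x})" using finVG by simp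
  have img: "f ` verts F = verts G - {x}"
    by (rule card_subset_eq[OF finVx f(2)]) (simp add: card_image[OF f(1)] cardVx)
  have bij: "bij_betw f (verts F) (verts G - {x})" using f(1) img unfolding bij_betw_def by simp
  obtain c a b where cab: "c \<in> verts (Fc 0)" "a \<in> verts (Fc 0)" "a \<noteq> c"
     "\<forall>u\<in>verts (Fc 0). u \<noteq> c \<longrightarrow> {c, u} \<in> edges (Fc 0)" using domFc[OF q0] by blast
  have "\<exists>ez. ez \<in> edges (Fc 0) \<and> x \<in> ez"
  proof (cases "x = c")
    case True then show ?thesis using cab by blast
  next
    case False then show ?thesis using cab x by blast
  qed
  then obtain ex where ex: "ex \<in> edges (Fc 0)" "x \<in> ex" by blast
  have exG: "ex \<in> edges G" using EF_G[OF q0] ex(1) by blast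
  define EH where "EH = {e\<in>edges G. e \<subseteq> verts G - {x}}"
  have EHsub: "EH \<subseteq> edges G - {ex}" using ex(2) EH_def by auto
  have vwnot: "{v 0, w 0} \<notin> edges (Fc 0)" using EFsub[OF q0] v0 by blast
  have cEG: "card (edges G) = Suc (card (edges F))"
    using EG1 vwnot finEF[OF q0] cardEF[OF q0] by simp
  have cEx: "card (edges G - {ex}) = card (edges F)" using cEG exG finEG by simp
  have imgE: "image f ` edges F \<subseteq> EH" using f(3) EH_def by blast
  have sub: "edges F \<subseteq> Pow (verts F)" using wf_edge_sub[OF wfF] by blast
  have injP: "inj_on (image f) (edges F)" using inj_on_image_Pow[OF f(1)] sub inj_on_subset by blast
  have cimg: "card (image f ` edges F) = card (edges F)" using card_image[OF injP] .
  have finEx: "finite (edges G - {ex})" using finEG by simp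
  have finEH: "finite EH" using finite_subset[OF EHsub finEx] .
  have "card (edges F) \<le> card EH" using card_mono[OF finEH imgE] cimg by simp
  moreover have "card EH \<le> card (edges G - {ex})" using card_mono[OF finEx EHsub] .
  ultimately have "card EH = card (edges G - {ex})" using cEx by simp
  then have EHeq: "EH = edges G - {ex}" using card_subset_eq[OF finEx EHsub] by simp
  have EHimg: "image f ` edges F = EH" using card_subset_eq[OF finEH imgE] cimg
    \<open>card EH = card (edges G - {ex})\<close> cEx by simp
  have iso: "graph_iso F (induced G (verts G - {x})) f"
    unfolding graph_iso_def using bij EHimg EH_def by simp
  obtain a' b' where ab': "ex = {a',b'}" "a' \<noteq> b'" "a' \<in> verts (Fc 0)" "b' \<in> verts (Fc 0)"
    using EF[OF q0 ex(1)] by blast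
  define y where "y = (if a' = x then b' else a')"
  have exy: "ex = {x, y}" using ab' ex(2) y_def by auto
  have yx: "y \<noteq> x" using ab' ex(2) y_def by auto
  have yG: "y \<in> verts G - {x}" using ab' y_def yx VG1 by auto
  have xG: "x \<in> verts G" using VG1 x by simp
  have Geq: "G = (verts G, edges G)" by (simp add: verts_def edges_def)
  have rep': "special_rep m F G 1 ({x}, {}) (\<lambda>_. x) (\<lambda>_. induced G (verts G - {x})) (\<lambda>_. y)"
    unfolding special_rep_def
  proof (intro conjI)
    show "(1::nat) \<le> 1" by simp
    show "m + 1 = 1 * (card (edges F) + 2)" using mq q by simp
    show "is_tree ({x}, {})" by (rule tree_single)
    show "verts ({x}, {}) = (\<lambda>_. x) ` {..<1::nat}" by (simp add: verts_def lessThan_Suc)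
    show "inj_on (\<lambda>_. x) {..<1::nat}" by (simp add: inj_on_def)
    show "\<forall>i<(1::nat). isomorphic F (induced G (verts G - {x}))" using iso unfolding isomorphic_def by blast
    show "\<forall>i<(1::nat). \<forall>j<(1::nat). i \<noteq> j \<longrightarrow> verts (induced G (verts G - {x})) \<inter> verts (induced G (verts G - {x})) = {}"
      by (simp add: less_Suc_eq)
    show "\<forall>i<(1::nat). verts (induced G (verts G - {x})) \<inter> verts ({x}, {}) = {}"
      by (simp add: induced_def verts_def)
    show "\<forall>i<(1::nat). y \<in> verts (induced G (verts G - {x}))" using yG by simp
    have V: "verts ({x}, {}) \<union> (\<Union>i<(1::nat). verts (induced G (verts G - {x}))) = verts G"
      using xG by auto
    have E: "edges ({x}, {}) \<union> (\<Union>i<(1::nat). edges (induced G (verts G - {x})) \<union> {{x, y}}) = edges G"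
      using EHeq exG exy unfolding EH_def by auto
    show "G = (verts ({x}, {}) \<union> (\<Union>i<(1::nat). verts (induced G (verts G - {x}))),
       edges ({x}, {}) \<union> (\<Union>i<(1::nat). edges (induced G (verts G - {x})) \<union> {{x, y}}))"
      unfolding V E using Geq .
  qed
  show ?thesis using rep' by (intro exI[of _ "({x}, {})"]) (auto simp: verts_def)
qed

end


context SP begin

lemma partB:
  assumes xG: "x \<in> verts G"
    and hyp: "\<forall>q' T' v' Fc' w'. special_rep m F G q' T' v' Fc' w' \<longrightarrow> x \<notin> verts T'"
  shows "iota (delete_vertex G x) F = q - 1"
proof -
  have xT: "x \<notin> verts T" using hyp rep by blast
  then obtain i where i: "i < q" "x \<in> verts (Fc i)" using xG unfolding vert_G by blast
  show ?thesis
  proof (cases "q = 1")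
    case True
    then have i0: "i = 0" using i by simp
    have nc: "\<not> contains_copy (induced G (verts G - closed_nbhd G {} - {x})) F"
    proof
      assume "contains_copy (induced G (verts G - closed_nbhd G {} - {x})) F"
      then have "contains_copy (induced G (verts G - {x})) F" by simp
      then obtain T' v' Fc' w' where "special_rep m F G 1 T' v' Fc' w'" "x \<in> verts T'"
        using q1_swap[OF True] i i0 by blast
      then show False using hyp by blast
    qed
    have "isolating (delete_vertex G x) F {}" using del_isolating[of "{}" G x F] nc by simp
    then have "iota (delete_vertex G x) F = 0" using iota_eq[of _ F "{}" 0] by simp
    then show ?thesis using True by simp
  next
    case False
    then have q2: "q \<ge> 2" using q1 by simp
    let ?D = "v ` ({..<q} - {i})"
    have Dsub: "?D \<subseteq> verts G - {x}" using VT_G VT xT by blast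
    have vS: "v j \<in> closed_nbhd G ?D" if "j < q" "j \<noteq> i" for j
      using nbhd_sub[of ?D G] that by blast
    obtain j0 where j0: "j0 < q" "j0 \<noteq> i" "{v j0, v i} \<in> edges G" using tree_nb[OF q2 i(1)] by blast
    have viN: "v i \<in> closed_nbhd G ?D"
      using nbhd_in[of "v i" G "v j0" ?D] j0 VT_G vT[OF i(1)] by blast
    let ?S = "verts G - closed_nbhd G ?D - {x}"
    have nc: "\<not> contains_copy (induced G ?S) F"
    proof (rule no_copy_induced[OF wfF domF])
      fix y assume y: "y \<in> ?S"
      then have yG: "y \<in> verts G" by blast
      from yG consider "y \<in> verts T" | j where "j < q" "y \<in> verts (Fc j)" unfolding vert_G by blast
      then show "\<exists>P B. y \<in> P \<and> (\<forall>u. {y,u} \<in> edges G \<and> {y,u} \<subseteq> ?S \<longrightarrow> u \<in> P) \<and>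
        {e\<in>edges G. e \<subseteq> ?S \<and> e \<subseteq> P} \<subseteq> B \<and> finite B \<and> card B < card (edges F)"
      proof cases
        case 1
        then obtain j where j: "j < q" "y = v j" using VT by blast
        show ?thesis
        proof (cases "j = i")
          case True then show ?thesis using viN y j by blast
        next
          case False then show ?thesis using vS[OF j(1) False] y j by blast
        qed
      next
        case 2
        show ?thesis
        proof (cases "j = i")
          case True
          have "x \<notin> ?S" by blast
          moreover have "v i \<notin> ?S" using viN by blast
          ultimately show ?thesis using RA[OF i(1) i(2) _ _, of ?S y] 2 True by blast
        next
          case False
          have "w j \<in> closed_nbhd G ?D"
            using nbhd_in[of "w j" G "v j" ?D] vw_G[OF 2(1)] VF_G[OF 2(1)] wI[OF 2(1)] False 2(1) by blast
          then show ?thesis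
            using RA[OF 2(1) wI[OF 2(1)] _ _ 2(2), of ?S] vS[OF 2(1) False] by blast
        qed
      qed
    qed
    have isoD: "isolating (delete_vertex G x) F ?D" using del_isolating[OF Dsub, of F] nc by blast
    have cJ: "card ({..<q} - {i}) = q - 1" using i(1) by simp
    have cardD: "card ?D = q - 1"
      using card_image[OF inj_on_subset[OF injv, of "{..<q} - {i}"]] cJ by auto
    show ?thesis
    proof (rule iota_eq[OF isoD cardD])
      fix D assume iD: "isolating (delete_vertex G x) F D"
      then have D: "D \<subseteq> verts G - {x}" unfolding isolating_def by simp
      then have ncD: "\<not> contains_copy (induced G (verts G - closed_nbhd G D - {x})) F"
        using del_isolating[OF D, of F] iD by blast
      have D': "D \<subseteq> verts G" using D by blast
      have finD: "finite D" using finite_subset[OF D' finVG] .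
      have "card ({..<q} - {i}) \<le> card D"
      proof (rule card_LB[OF finD])
        show "{..<q} - {i} \<subseteq> {..<q}" by blast
        fix j assume j: "j \<in> {..<q} - {i}"
        then have jq: "j < q" and ji: "j \<noteq> i" by auto
        have "verts (Fc j) \<inter> {x} = {}" using FF[OF jq i(1) _ i(2)] ji by blast
        then show "D \<inter> insert (v j) (verts (Fc j)) \<noteq> {}" using LB[OF D' jq _ ncD] by blast
      qed
      then show "q - 1 \<le> card D" using cJ by simp
    qed
  qed
qed

end

lemma Fe_partA:
  fixes F :: "'b graph" and G :: "'a graph"
  assumes w: "wf_graph F" and d: "dominating_vertex_exists F" and k: "card (edges F) \<ge> 3"
    and ce: "complement_edge F e" and iso: "isomorphic (add_edge F e) G"
  shows "\<forall>x\<in>verts G. \<exists>D. min_isolating G F D \<and> x \<in> D"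
proof -
  obtain g where g: "graph_iso (add_edge F e) G g" using iso unfolding isomorphic_def by blast
  have bij: "bij_betw g (verts F) (verts G)" using g unfolding graph_iso_def add_edge_def by simp
  have EG: "edges G = image g ` insert e (edges F)" using g unfolding graph_iso_def add_edge_def by simp
  define H0 where "H0 = (verts G, image g ` edges F)"
  have isoH: "graph_iso F H0 g" unfolding graph_iso_def H0_def using bij by simp
  have good: "goodF F H0" using iso_good[OF w d k isoH] .
  have VH0: "verts H0 = verts G" and EH0: "edges H0 = image g ` edges F" unfolding H0_def by simp_all
  have EH0G: "edges H0 \<subseteq> edges G" unfolding EH0 EG by (intro image_mono subset_insertI)
  obtain c a b where cab: "c \<in> verts G" "a \<in> verts G" "b \<in> verts G" "a \<noteq> b" "a \<noteq> c" "b \<noteq> c"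
     "\<forall>u\<in>verts G. u \<noteq> c \<longrightarrow> {c, u} \<in> edges H0" using good VH0 unfolding goodF_def by metis
  have copy: "\<And>R::'a graph. verts G \<subseteq> verts R \<Longrightarrow> edges H0 \<subseteq> edges R \<Longrightarrow> contains_copy R F"
    using good VH0 unfolding goodF_def by metis
  have finEH0: "finite (edges H0)" and cEH0: "card (edges H0) = card (edges F)"
    and finVG: "finite (verts G)" using good VH0 unfolding goodF_def by auto
  have EGins: "edges G = insert (g ` e) (edges H0)" using EG EH0 by simp
  have finEG: "finite (edges G)" using EGins finEH0 by simp
  have cEG: "card (edges G) \<le> Suc (card (edges F))" using EGins finEH0 cEH0 card_insert_le
    by (metis card_insert_if le_SucI order_refl)
  have ca: "{c,a} \<in> edges G" and cb: "{c,b} \<in> edges G" using cab EH0G by auto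
  have cab2: "{c,a} \<noteq> {c,b}" using cab by (auto simp: doubleton_eq_iff)
  have isoX: "isolating G F {x}" if x: "x \<in> verts G" for x
    unfolding isolating_def
  proof (intro conjI)
    show "{x} \<subseteq> verts G" using x by simp
    let ?S = "verts G - closed_nbhd G {x}"
    have cN: "c \<in> closed_nbhd G {x}"
    proof (cases "x = c")
      case True then show ?thesis using nbhd_sub[of "{x}" G] by blast
    next
      case False
      then have "{c,x} \<in> edges G" using cab(7) x EH0G by blast
      then have "{x,c} \<in> edges G" by (simp add: insert_commute)
      then show ?thesis using nbhd_in[of c G x "{x}"] cab(1) by blast
    qed
    define B where "B = edges G - {{c,a},{c,b}}"
    have finB: "finite B" using finEG B_def by simp
    have "card B = card (edges G) - 2" unfolding B_def using ca cb cab2 finEG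
      by (simp add: card_Diff_subset)
    then have cB: "card B < card (edges F)" using cEG k by linarith
    have sub: "{e\<in>edges G. e \<subseteq> ?S \<and> e \<subseteq> UNIV} \<subseteq> B" using cN unfolding B_def by auto
    show "\<not> contains_copy (induced G ?S) F"
    proof (rule no_copy_induced[OF w d])
      fix y assume "y \<in> ?S"
      have "y \<in> UNIV \<and> (\<forall>u. {y,u} \<in> edges G \<and> {y,u} \<subseteq> ?S \<longrightarrow> u \<in> UNIV) \<and>
        {e\<in>edges G. e \<subseteq> ?S \<and> e \<subseteq> UNIV} \<subseteq> B \<and> finite B \<and> card B < card (edges F)"
        using finB cB sub by simp
      then show "\<exists>P B. y \<in> P \<and> (\<forall>u. {y,u} \<in> edges G \<and> {y,u} \<subseteq> ?S \<longrightarrow> u \<in> P) \<and>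
        {e\<in>edges G. e \<subseteq> ?S \<and> e \<subseteq> P} \<subseteq> B \<and> finite B \<and> card B < card (edges F)"
        by blast
    qed
  qed
  have low: "1 \<le> card D" if iD: "isolating G F D" for D
  proof (rule ccontr)
    assume "\<not> 1 \<le> card D"
    then have c0: "card D = 0" by simp
    have D: "D \<subseteq> verts G" and nc: "\<not> contains_copy (induced G (verts G - closed_nbhd G D)) F"
      using iD unfolding isolating_def by auto
    have "D = {}" using c0 finite_subset[OF D finVG] by simp
    have shp: "\<forall>e\<in>edges H0. \<exists>a b. e = {a,b} \<and> a \<noteq> b \<and> a \<in> verts H0 \<and> b \<in> verts H0"
      using good unfolding goodF_def by blast
    have "edges H0 \<subseteq> {e\<in>edges G. e \<subseteq> verts G - closed_nbhd G D}"
    proof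
      fix e assume e: "e \<in> edges H0"
      from bspec[OF shp e] obtain a' b' where ab': "e = {a',b'}" "a' \<in> verts H0" "b' \<in> verts H0" by blast
      then have "a' \<in> verts G" "b' \<in> verts G" unfolding VH0 by auto
      note ab'(1) this
      then show "e \<in> {e\<in>edges G. e \<subseteq> verts G - closed_nbhd G D}" using e EH0G \<open>D = {}\<close> by auto
    qed
    then have "contains_copy (induced G (verts G - closed_nbhd G D)) F"
      using copy[of "induced G (verts G - closed_nbhd G D)"] \<open>D = {}\<close> by simp
    then show False using nc by blast
  qed
  have iotaG: "iota G F = 1" using iota_eq[OF isoX[OF cab(1)]] low by simp
  show ?thesis
  proof
    fix x assume x: "x \<in> verts G"
    have "min_isolating G F {x}" unfolding min_isolating_def using isoX[OF x] iotaG by simp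
    then show "\<exists>D. min_isolating G F D \<and> x \<in> D" by blast
  qed
qed

theorem lemma3p4_proof:
  fixes F :: "'b graph" and G :: "'a graph"
  assumes "wf_graph F"
    and "dominating_vertex_exists F"
    and "card (edges F) \<ge> 3"
    and "(\<exists>m. pure_special m F G) \<or> (\<exists>e. complement_edge F e \<and> isomorphic (add_edge F e) G)"
  shows "(\<forall>x\<in>verts G. \<exists>D. min_isolating G F D \<and> x \<in> D) \<and>
         (\<forall>m x. pure_special m F G \<longrightarrow> x \<in> verts G \<longrightarrow>
            (\<forall>q T v Fc w. special_rep m F G q T v Fc w \<longrightarrow> x \<notin> verts T) \<longrightarrow>
            iota (delete_vertex G x) F = iota G F - 1)"
proof (intro conjI)
  show "\<forall>x\<in>verts G. \<exists>D. min_isolating G F D \<and> x \<in> D"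
    using assms(4)
  proof
    assume "\<exists>m. pure_special m F G"
    then obtain m q T v Fc w where r: "special_rep m F G q T v Fc w" unfolding pure_special_def by blast
    interpret SP F G m q T v Fc w using assms(1-3) r by unfold_locales
    show ?thesis using partA by blast
  next
    assume "\<exists>e. complement_edge F e \<and> isomorphic (add_edge F e) G"
    then obtain e where "complement_edge F e" "isomorphic (add_edge F e) G" by blast
    then show ?thesis using Fe_partA[OF assms(1-3)] by blast
  qed
  show "\<forall>m x. pure_special m F G \<longrightarrow> x \<in> verts G \<longrightarrow>
            (\<forall>q T v Fc w. special_rep m F G q T v Fc w \<longrightarrow> x \<notin> verts T) \<longrightarrow>
            iota (delete_vertex G x) F = iota G F - 1"
  proof (intro allI impI)
    fix m x
    assume ps: "pure_special m F G" and xG: "x \<in> verts G"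
      and hyp: "\<forall>q T v Fc w. special_rep m F G q T v Fc w \<longrightarrow> x \<notin> verts T"
    obtain q T v Fc w where r: "special_rep m F G q T v Fc w" using ps unfolding pure_special_def by blast
    interpret SP F G m q T v Fc w using assms(1-3) r by unfold_locales
    show "iota (delete_vertex G x) F = iota G F - 1" using partB[OF xG hyp] iotaG by simp
  qed
qed

theorem lemma3p4:
  fixes F :: "'b graph" and G :: "'a graph"
  assumes "wf_graph F"
    and "dominating_vertex_exists F"
    and "card (edges F) \<ge> 3"
    and "(\<exists>m. pure_special m F G) \<or> (\<exists>e. complement_edge F e \<and> isomorphic (add_edge F e) G)"
  shows "(\<forall>x\<in>verts G. \<exists>D. min_isolating G F D \<and> x \<in> D) \<and>
         (\<forall>m x. pure_special m F G \<longrightarrow> x \<in> verts G \<longrightarrow>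
            (\<forall>q T v Fc w. special_rep m F G q T v Fc w \<longrightarrow> x \<notin> verts T) \<longrightarrow>
            iota (delete_vertex G x) F = iota G F - 1)"
  using lemma3p4_proof[OF assms] .

end
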